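(* Let $Q$ be a $D$-dimensional convex polytope in $\mathbb{R}^D$ with $m$ vertices. Then $Q$ is locally point symmetric if and only if $Q$ has exactly $m/2$ (unordered) pairs of strictly antipodal vertices.
   Context: $Q$ is $D$-dimensional means its affine hull is $\mathbb{R}^D$. Two vertices $\mathbf{u},\mathbf{v}$ of a convex polytope $Q$ are strictly antipodal if there exist parallel supporting hyperplanes $H_1,H_2$ of $Q$ with $H_1\cap Q=\{\mathbf{u}\}$ and $H_2 \cap Q = \{\mathbf{v}\}$. The supporting cone of $Q$ at a vertex $\mathbf{v}$ is $C(\mathbf{v}) = \mathbf{v} + \bigcup_{\lambda \ge 0}\lambda(Q - \mathbf{v})$. A convex polytope $Q$ with $m$ vertices is locally point symmetric if its vertices can be partitioned into $m/2$ pairs of strictly antipodal vertices such that for each pair $\{\mathbf{u},\mathbf{v}\}$, $C(\mathbf{u}) - \mathbf{u} = \mathbf{v} - C(\mathbf{v})$. *)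

theory Defs
  imports "HOL-Analysis.Analysis"
begin

definition vertices :: "'a::euclidean_space set \<Rightarrow> 'a set" where
  "vertices Q = {v. v extreme_point_of Q}"

definition supporting_hyperplane :: "'a::euclidean_space set \<Rightarrow> 'a set \<Rightarrow> bool" where
  "supporting_hyperplane Q H \<longleftrightarrow>
     (\<exists>a b. a \<noteq> 0 \<and> H = {x. a \<bullet> x = b} \<and> H \<inter> Q \<noteq> {} \<and> Q \<subseteq> {x. a \<bullet> x \<le> b})"

definition parallel_hyperplanes :: "'a::euclidean_space set \<Rightarrow> 'a set \<Rightarrow> bool" where
  "parallel_hyperplanes H1 H2 \<longleftrightarrow>
     (\<exists>a1 b1 a2 b2 c. a1 \<noteq> 0 \<and> c \<noteq> 0 \<and> a2 = c *\<^sub>R a1 \<and>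
        H1 = {x. a1 \<bullet> x = b1} \<and> H2 = {x. a2 \<bullet> x = b2})"

definition strictly_antipodal :: "'a::euclidean_space set \<Rightarrow> 'a \<Rightarrow> 'a \<Rightarrow> bool" where
  "strictly_antipodal Q u v \<longleftrightarrow>
     u \<in> vertices Q \<and> v \<in> vertices Q \<and>
     (\<exists>H1 H2. supporting_hyperplane Q H1 \<and> supporting_hyperplane Q H2 \<and>
        parallel_hyperplanes H1 H2 \<and> H1 \<inter> Q = {u} \<and> H2 \<inter> Q = {v})"

definition supporting_cone :: "'a::euclidean_space set \<Rightarrow> 'a \<Rightarrow> 'a set" where
  "supporting_cone Q v = {v + l *\<^sub>R (x - v) | l x. l \<ge> 0 \<and> x \<in> Q}"

definition antipodal_pairs :: "'a::euclidean_space set \<Rightarrow> 'a set set" where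
  "antipodal_pairs Q = {{u, v} | u v. u \<noteq> v \<and> strictly_antipodal Q u v}"

definition locally_point_symmetric :: "'a::euclidean_space set \<Rightarrow> bool" where
  "locally_point_symmetric Q \<longleftrightarrow>
     (\<exists>P. (\<forall>p\<in>P. \<exists>u v. p = {u, v} \<and> u \<noteq> v \<and> strictly_antipodal Q u v \<and>
              (\<lambda>x. x - u) ` supporting_cone Q u = (\<lambda>x. v - x) ` supporting_cone Q v) \<and>
          (\<forall>p\<in>P. \<forall>q\<in>P. p \<noteq> q \<longrightarrow> p \<inter> q = {}) \<and>
          \<Union>P = vertices Q \<and> 2 * card P = card (vertices Q))"

end

theory Submission
  imports Defs
begin


definition exposes :: "'a::euclidean_space set \<Rightarrow> 'a \<Rightarrow> 'a \<Rightarrow> bool" where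
  "exposes Q a u \<longleftrightarrow> u \<in> Q \<and> (\<forall>x\<in>Q. x \<noteq> u \<longrightarrow> a \<bullet> x < a \<bullet> u)"

lemma exposes_unique: "exposes Q a u \<Longrightarrow> exposes Q a w \<Longrightarrow> u = w"
  unfolding exposes_def by (metis less_asym)

lemma exposes_scale: "exposes Q (t *\<^sub>R a) w \<Longrightarrow> t > 0 \<Longrightarrow> exposes Q a w"
  unfolding exposes_def by (auto simp: mult_less_cancel_left_pos)

lemma poly_facts:
  assumes "polytope Q"
  shows "finite (vertices Q)" "Q = convex hull (vertices Q)" "vertices Q \<subseteq> Q"
proof -
  show "finite (vertices Q)" unfolding vertices_def
    using assms finite_polyhedron_extreme_points polytope_imp_polyhedron by blast
  show "Q = convex hull (vertices Q)" unfolding vertices_def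
    using Krein_Milman_Minkowski assms polytope_imp_compact polytope_imp_convex by blast
  show "vertices Q \<subseteq> Q" unfolding vertices_def extreme_point_of_def by auto
qed

lemma vertex_exposed:
  assumes "polytope Q" "u \<in> vertices Q"
  shows "\<exists>a. exposes Q a u"
proof -
  have "{u} face_of Q" using assms(2) face_of_singleton vertices_def by auto
  then have "{u} exposed_face_of Q"
    using exposed_face_of_polyhedron assms(1) polytope_imp_polyhedron by blast
  then obtain a b where ab: "Q \<subseteq> {x. a \<bullet> x \<le> b}" "{u} = Q \<inter> {x. a \<bullet> x = b}"
    unfolding exposed_face_of_def by blast
  have "exposes Q a u" unfolding exposes_def
  proof safe
    show "u \<in> Q" using ab by auto
    fix x assume "x \<in> Q" "x \<noteq> u"
    then have "a \<bullet> x < b" using ab by fastforce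
    moreover have "a \<bullet> u = b" using ab by auto
    ultimately show "a \<bullet> x < a \<bullet> u" by simp
  qed
  then show ?thesis by blast
qed

lemma exposes_vertex: "exposes Q a u \<Longrightarrow> u \<in> vertices Q"
  unfolding exposes_def vertices_def extreme_point_of_def
proof safe
  fix x y assume u: "u \<in> Q" "\<forall>x\<in>Q. x \<noteq> u \<longrightarrow> a \<bullet> x < a \<bullet> u" and xy: "x \<in> Q" "y \<in> Q" "u \<in> open_segment x y"
  then obtain t where t: "0 < t" "t < 1" "u = (1 - t) *\<^sub>R x + t *\<^sub>R y" "x \<noteq> y"
    by (auto simp: in_segment)
  have eq: "a \<bullet> u = (1 - t) * (a \<bullet> x) + t * (a \<bullet> y)" using t(3) by (simp add: inner_add_right)
  have eq2: "(1 - t) * (a \<bullet> u) + t * (a \<bullet> u) = a \<bullet> u" by (simp add: algebra_simps)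
  moreover have "a \<bullet> x \<le> a \<bullet> u" "a \<bullet> y \<le> a \<bullet> u" using u xy by (metis less_le_not_le order_refl)+
  moreover have "x \<noteq> u \<or> y \<noteq> u" using t by auto
  ultimately show False
  proof (elim disjE)
    assume "x \<noteq> u"
    then have "a \<bullet> x < a \<bullet> u" using u xy by blast
    then have "(1 - t) * (a \<bullet> x) < (1 - t) * (a \<bullet> u)" using t(1,2) by simp
    moreover have "t * (a \<bullet> y) \<le> t * (a \<bullet> u)" using t(1,2) \<open>a \<bullet> y \<le> a \<bullet> u\<close> by simp
    ultimately show False using eq eq2 by linarith
  next
    assume "y \<noteq> u"
    then have "a \<bullet> y < a \<bullet> u" using u xy by blast
    then have "t * (a \<bullet> y) < t * (a \<bullet> u)" using t(1,2) by simp
    moreover have "(1 - t) * (a \<bullet> x) \<le> (1 - t) * (a \<bullet> u)" using t(1,2) \<open>a \<bullet> x \<le> a \<bullet> u\<close> by simp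
    ultimately show False using eq eq2 by linarith
  qed
qed

lemma hyperplane_normal:
  fixes a a1 :: "'a::euclidean_space"
  assumes "a1 \<noteq> 0" "{x. a \<bullet> x = b} = {x. a1 \<bullet> x = b1}" "p \<in> {x. a \<bullet> x = b}"
  shows "\<exists>k. a = k *\<^sub>R a1"
proof -
  define y where "y = a - ((a \<bullet> a1) / (a1 \<bullet> a1)) *\<^sub>R a1"
  have "a1 \<bullet> y = 0" using assms(1) by (simp add: y_def inner_diff_right inner_commute)
  have "a1 \<bullet> p = b1" using assms by auto
  then have "p + y \<in> {x. a1 \<bullet> x = b1}" using \<open>a1 \<bullet> y = 0\<close> by (simp add: inner_add_right)
  then have "a \<bullet> (p + y) = b" using assms(2) by auto
  then have "a \<bullet> y = 0" using assms(3) by (simp add: inner_add_right)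
  then have "y \<bullet> y = 0" using \<open>a1 \<bullet> y = 0\<close> by (simp add: y_def inner_diff_left inner_commute)
  then have "y = 0" by simp
  then show ?thesis unfolding y_def by (metis eq_iff_diff_eq_0)
qed



lemma hull_le:
  assumes "\<forall>x\<in>V. f \<bullet> x \<le> c" "y \<in> convex hull V"
  shows "f \<bullet> y \<le> c"
proof -
  have "convex hull V \<subseteq> {x. f \<bullet> x \<le> c}"
    by (rule hull_minimal) (use assms convex_halfspace_le in auto)
  then show ?thesis using assms by auto
qed

lemma exposes_hull:
  assumes "finite V" "u \<in> V" "\<forall>x\<in>V. x \<noteq> u \<longrightarrow> a \<bullet> x < a \<bullet> u"
  shows "exposes (convex hull V) a u"
  unfolding exposes_def
proof (intro conjI ballI impI)
  show "u \<in> convex hull V" using assms(2) by (rule hull_inc)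
  fix y assume y: "y \<in> convex hull V" "y \<noteq> u"
  have "y \<in> {y. \<exists>u. (\<forall>x\<in>V. 0 \<le> u x) \<and> sum u V = 1 \<and> sum (\<lambda>x. u x *\<^sub>R x) V = y}"
    using convex_hull_finite[OF assms(1)] y(1) by blast
  then obtain m where m: "\<forall>x\<in>V. 0 \<le> m x" "sum m V = 1" "(\<Sum>x\<in>V. m x *\<^sub>R x) = y"
    by blast
  have "a \<bullet> y = a \<bullet> (\<Sum>x\<in>V. m x *\<^sub>R x)" using m(3) by simp
  also have "\<dots> = (\<Sum>x\<in>V. m x * (a \<bullet> x))" by (simp add: inner_sum_right)
  finally have ay: "a \<bullet> y = (\<Sum>x\<in>V. m x * (a \<bullet> x))" .
  have au: "a \<bullet> u = (\<Sum>x\<in>V. m x * (a \<bullet> u))"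
  proof -
    have "(\<Sum>x\<in>V. m x * (a \<bullet> u)) = sum m V * (a \<bullet> u)" by (rule sum_distrib_right[symmetric])
    then show ?thesis using m(2) by simp
  qed
  have eq: "a \<bullet> y - a \<bullet> u = (\<Sum>x\<in>V. m x * (a \<bullet> x - a \<bullet> u))"
  proof -
    have "(\<Sum>x\<in>V. m x * (a \<bullet> x - a \<bullet> u)) = (\<Sum>x\<in>V. m x * (a \<bullet> x)) - (\<Sum>x\<in>V. m x * (a \<bullet> u))"
      by (simp add: right_diff_distrib sum_subtractf)
    then show ?thesis using ay au by linarith
  qed
  have le: "\<forall>x\<in>V. m x * (a \<bullet> x - a \<bullet> u) \<le> 0"
  proof
    fix x assume "x \<in> V"
    then have "a \<bullet> x - a \<bullet> u \<le> 0" using assms(3) by (cases "x = u") auto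
    then show "m x * (a \<bullet> x - a \<bullet> u) \<le> 0" using m(1) \<open>x \<in> V\<close> by (simp add: mult_nonneg_nonpos)
  qed
  show "a \<bullet> y < a \<bullet> u"
  proof (rule ccontr)
    assume "\<not> a \<bullet> y < a \<bullet> u"
    then have "(\<Sum>x\<in>V. m x * (a \<bullet> x - a \<bullet> u)) \<ge> 0" using eq by linarith
    moreover have "(\<Sum>x\<in>V. m x * (a \<bullet> x - a \<bullet> u)) \<le> 0" by (rule sum_nonpos) (use le in blast)
    ultimately have s: "(\<Sum>x\<in>V. m x * (a \<bullet> x - a \<bullet> u)) = 0" by (rule antisym[rotated])
    have s0: "(\<Sum>x\<in>V. - (m x * (a \<bullet> x - a \<bullet> u))) = 0" by (simp only: sum_negf s minus_zero)
    have nn: "\<And>x. x \<in> V \<Longrightarrow> 0 \<le> - (m x * (a \<bullet> x - a \<bullet> u))"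
    proof -
      fix x assume "x \<in> V"
      then have "m x * (a \<bullet> x - a \<bullet> u) \<le> 0" using le by blast
      then show "0 \<le> - (m x * (a \<bullet> x - a \<bullet> u))" by (rule neg_0_le_iff_le[THEN iffD2])
    qed
    have z0: "\<forall>x\<in>V. - (m x * (a \<bullet> x - a \<bullet> u)) = 0"
      using sum_nonneg_eq_0_iff[OF assms(1) nn] s0 by (rule iffD1)
    have m0: "\<forall>x\<in>V - {u}. m x = 0"
    proof
      fix x assume x: "x \<in> V - {u}"
      then have "a \<bullet> x < a \<bullet> u" using assms(3) by blast
      then have "a \<bullet> x - a \<bullet> u \<noteq> 0" by linarith
      moreover have "- (m x * (a \<bullet> x - a \<bullet> u)) = 0" using z0 x by blast
      ultimately show "m x = 0" by simp
    qed
    have r1: "(\<Sum>x\<in>V. m x *\<^sub>R x) = m u *\<^sub>R u + (\<Sum>x\<in>V - {u}. m x *\<^sub>R x)"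
      by (rule sum.remove[OF assms(1,2)])
    have r2: "(\<Sum>x\<in>V - {u}. m x *\<^sub>R x) = 0" by (rule sum.neutral) (use m0 in simp)
    have r3: "sum m V = m u + sum m (V - {u})" by (rule sum.remove[OF assms(1,2)])
    have r4: "sum m (V - {u}) = 0" by (rule sum.neutral) (use m0 in simp)
    have "m u = 1" using r3 r4 m(2) by simp
    then have "y = u" using m(3) r1 r2 by simp
    then show False using y by simp
  qed
qed

lemma SA_imp:
  fixes Q :: "'a::euclidean_space set"
  assumes "strictly_antipodal Q u w" "u \<noteq> w"
  shows "\<exists>a. exposes Q a u \<and> exposes Q (-a) w"
proof -
  obtain H1 H2 where H: "supporting_hyperplane Q H1" "supporting_hyperplane Q H2"
     "parallel_hyperplanes H1 H2" "H1 \<inter> Q = {u}" "H2 \<inter> Q = {w}"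
    using assms unfolding strictly_antipodal_def by blast
  obtain a b where ab: "a \<noteq> 0" "H1 = {x. a \<bullet> x = b}" "Q \<subseteq> {x. a \<bullet> x \<le> b}"
    using H(1) unfolding supporting_hyperplane_def by blast
  obtain a' b' where ab': "a' \<noteq> 0" "H2 = {x. a' \<bullet> x = b'}" "Q \<subseteq> {x. a' \<bullet> x \<le> b'}"
    using H(2) unfolding supporting_hyperplane_def by blast
  obtain a1 b1 b2 c where P: "a1 \<noteq> 0" "c \<noteq> 0" "H1 = {x. a1 \<bullet> x = b1}" "H2 = {x. (c *\<^sub>R a1) \<bullet> x = b2}"
    using H(3) unfolding parallel_hyperplanes_def by blast
  have uH: "u \<in> H1" "u \<in> Q" and wH: "w \<in> H2" "w \<in> Q" using H(4,5) by blast+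
  have ex: "exposes Q a u"
    unfolding exposes_def
  proof (intro conjI ballI impI)
    fix x assume x: "x \<in> Q" "x \<noteq> u"
    then have "x \<notin> H1" using H(4) by blast
    then have "a \<bullet> x \<noteq> b" using ab(2) by simp
    moreover have "a \<bullet> x \<le> b" using ab(3) x(1) by blast
    moreover have "a \<bullet> u = b" using uH ab(2) by simp
    ultimately show "a \<bullet> x < a \<bullet> u" by simp
  qed (rule uH(2))
  have ex': "exposes Q a' w"
    unfolding exposes_def
  proof (intro conjI ballI impI)
    fix x assume x: "x \<in> Q" "x \<noteq> w"
    then have "x \<notin> H2" using H(5) by blast
    then have "a' \<bullet> x \<noteq> b'" using ab'(2) by simp
    moreover have "a' \<bullet> x \<le> b'" using ab'(3) x(1) by blast
    moreover have "a' \<bullet> w = b'" using wH ab'(2) by simp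
    ultimately show "a' \<bullet> x < a' \<bullet> w" by simp
  qed (rule wH(2))
  have e1: "{x. a \<bullet> x = b} = {x. a1 \<bullet> x = b1}" using ab(2) P(3) by simp
  have e2: "{x. a' \<bullet> x = b'} = {x. (c *\<^sub>R a1) \<bullet> x = b2}" using ab'(2) P(4) by simp
  obtain k where k: "a = k *\<^sub>R a1"
    using hyperplane_normal[OF P(1) e1, of u] uH ab(2) by auto
  have "c *\<^sub>R a1 \<noteq> 0" using P by simp
  then obtain k' where k': "a' = k' *\<^sub>R (c *\<^sub>R a1)"
    using hyperplane_normal[OF _ e2, of w] wH ab'(2) by auto
  have "k \<noteq> 0" using k ab by auto
  define t where "t = k' * c / k"
  have at: "a' = t *\<^sub>R a" using k k' \<open>k \<noteq> 0\<close> by (simp add: t_def)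
  have "t \<noteq> 0" using at ab' by auto
  show ?thesis
  proof (cases "t > 0")
    case True
    then have "exposes Q a w" using exposes_scale ex' at by blast
    then show ?thesis using exposes_unique ex assms(2) by blast
  next
    case False
    then have "-t > 0" using \<open>t \<noteq> 0\<close> by simp
    moreover have "a' = (-t) *\<^sub>R (-a)" using at by simp
    ultimately have "exposes Q (-a) w" using exposes_scale ex' by metis
    then show ?thesis using ex by blast
  qed
qed

lemma SA_intro:
  fixes Q :: "'a::euclidean_space set"
  assumes "exposes Q a u" "exposes Q (-a) w" "u \<noteq> w"
  shows "strictly_antipodal Q u w"
proof -
  have "a \<noteq> 0" using assms unfolding exposes_def by fastforce
  have s1: "supporting_hyperplane Q {x. a \<bullet> x = a \<bullet> u}"
    unfolding supporting_hyperplane_def using assms(1) \<open>a \<noteq> 0\<close>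
    by (intro exI[of _ a] exI[of _ "a \<bullet> u"]) (auto simp: exposes_def less_imp_le)
  have s2: "supporting_hyperplane Q {x. (-a) \<bullet> x = (-a) \<bullet> w}"
    unfolding supporting_hyperplane_def using assms(2) \<open>a \<noteq> 0\<close>
    by (intro exI[of _ "-a"] exI[of _ "(-a) \<bullet> w"]) (auto simp: exposes_def less_imp_le)
  have p: "parallel_hyperplanes {x. a \<bullet> x = a \<bullet> u} {x. (-a) \<bullet> x = (-a) \<bullet> w}"
    unfolding parallel_hyperplanes_def using \<open>a \<noteq> 0\<close>
    by (intro exI[of _ a] exI[of _ "a \<bullet> u"] exI[of _ "-a"] exI[of _ "(-a) \<bullet> w"] exI[of _ "-1"]) auto
  have i1: "{x. a \<bullet> x = a \<bullet> u} \<inter> Q = {u}" using assms(1) unfolding exposes_def by fastforce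
  have i2: "{x. (-a) \<bullet> x = (-a) \<bullet> w} \<inter> Q = {w}" using assms(2) unfolding exposes_def by fastforce
  show ?thesis unfolding strictly_antipodal_def
    using s1 s2 p i1 i2 exposes_vertex assms by blast
qed



lemma ev_pos:
  fixes \<alpha> \<beta> :: real
  assumes "\<alpha> > 0"
  shows "eventually (\<lambda>e. \<alpha> + e * \<beta> > 0) (at_right 0)"
proof -
  have "((\<lambda>e. \<alpha> + e * \<beta>) \<longlongrightarrow> \<alpha> + 0 * \<beta>) (at_right 0)"
    by (intro tendsto_intros)
  then show ?thesis using order_tendstoD(1) assms by fastforce
qed

lemma perturb:
  fixes Q :: "'a::euclidean_space set"
  assumes "polytope Q" "w \<in> vertices Q" "exposes Q a u"
    "\<forall>x\<in>vertices Q. (-a) \<bullet> x \<le> (-a) \<bullet> w"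
  shows "\<exists>a'. exposes Q a' u \<and> exposes Q (-a') w"
proof -
  let ?V = "vertices Q"
  have fin: "finite ?V" and Qh: "Q = convex hull ?V" and VQ: "?V \<subseteq> Q"
    using poly_facts[OF assms(1)] by auto
  have uV: "u \<in> ?V" using exposes_vertex assms(3) by blast
  obtain b where b: "exposes Q b w" using vertex_exposed assms(1,2) by blast
  have "eventually (\<lambda>e. \<forall>x\<in>?V - {u}. (a \<bullet> u - a \<bullet> x) + e * (b \<bullet> x - b \<bullet> u) > 0) (at_right 0)"
  proof (rule eventually_ball_finite)
    show "finite (?V - {u})" using fin by simp
    show "\<forall>x\<in>?V - {u}. eventually (\<lambda>e. (a \<bullet> u - a \<bullet> x) + e * (b \<bullet> x - b \<bullet> u) > 0) (at_right 0)"
    proof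
      fix x assume "x \<in> ?V - {u}"
      then have "a \<bullet> u - a \<bullet> x > 0" using assms(3) VQ unfolding exposes_def by auto
      then show "eventually (\<lambda>e. (a \<bullet> u - a \<bullet> x) + e * (b \<bullet> x - b \<bullet> u) > 0) (at_right 0)"
        by (rule ev_pos)
    qed
  qed
  moreover have "eventually (\<lambda>e. (e::real) > 0) (at_right 0)"
    by (simp add: eventually_at_right_less)
  ultimately have "eventually (\<lambda>e. e > 0 \<and> (\<forall>x\<in>?V - {u}. (a \<bullet> u - a \<bullet> x) + e * (b \<bullet> x - b \<bullet> u) > 0)) (at_right 0)"
    by (simp add: eventually_conj)
  then obtain e where e: "e > 0" "\<forall>x\<in>?V - {u}. (a \<bullet> u - a \<bullet> x) + e * (b \<bullet> x - b \<bullet> u) > 0"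
    using eventually_happens' trivial_limit_at_right_real by (metis (no_types, lifting))
  define a' where "a' = a - e *\<^sub>R b"
  have "exposes (convex hull ?V) a' u"
  proof (rule exposes_hull[OF fin uV], intro ballI impI)
    fix x assume "x \<in> ?V" "x \<noteq> u"
    then have "(a \<bullet> u - a \<bullet> x) + e * (b \<bullet> x - b \<bullet> u) > 0" using e by auto
    then show "a' \<bullet> x < a' \<bullet> u" by (simp add: a'_def inner_diff_left algebra_simps)
  qed
  moreover have "exposes (convex hull ?V) (-a') w"
  proof (rule exposes_hull[OF fin assms(2)], intro ballI impI)
    fix x assume x: "x \<in> ?V" "x \<noteq> w"
    then have "b \<bullet> x < b \<bullet> w" using b VQ unfolding exposes_def by auto
    then have "e * (b \<bullet> w - b \<bullet> x) > 0" using e by simp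
    moreover have "(-a) \<bullet> x \<le> (-a) \<bullet> w" using assms(4) x by blast
    ultimately show "(-a') \<bullet> x < (-a') \<bullet> w" by (simp add: a'_def inner_diff_left algebra_simps)
  qed
  ultimately show ?thesis using Qh by auto
qed



definition TC :: "'a::euclidean_space set \<Rightarrow> 'a \<Rightarrow> 'a set" where
  "TC Q u = (\<lambda>x. x - u) ` supporting_cone Q u"

lemma TC_eq: "TC Q u = {l *\<^sub>R (x - u) | l x. l \<ge> 0 \<and> x \<in> Q}"
proof (rule set_eqI)
  fix z
  show "z \<in> TC Q u \<longleftrightarrow> z \<in> {l *\<^sub>R (x - u) | l x. l \<ge> 0 \<and> x \<in> Q}"
  proof
    assume "z \<in> TC Q u"
    then obtain l x where "z = (u + l *\<^sub>R (x - u)) - u" "l \<ge> 0" "x \<in> Q"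
      unfolding TC_def supporting_cone_def by blast
    then show "z \<in> {l *\<^sub>R (x - u) | l x. l \<ge> 0 \<and> x \<in> Q}" by auto
  next
    assume "z \<in> {l *\<^sub>R (x - u) | l x. l \<ge> 0 \<and> x \<in> Q}"
    then obtain l x where lx: "z = l *\<^sub>R (x - u)" "l \<ge> 0" "x \<in> Q" by blast
    then have "u + l *\<^sub>R (x - u) \<in> supporting_cone Q u" unfolding supporting_cone_def by blast
    moreover have "z = (\<lambda>x. x - u) (u + l *\<^sub>R (x - u))" using lx by simp
    ultimately show "z \<in> TC Q u" unfolding TC_def by (rule rev_image_eqI)
  qed
qed

lemma refl_eq: "(\<lambda>x. v - x) ` supporting_cone Q v = uminus ` TC Q v"
  unfolding TC_def image_image by simp

lemma exposes_TC:
  assumes "u \<in> Q"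
  shows "exposes Q a u \<longleftrightarrow> (\<forall>z\<in>TC Q u. z \<noteq> 0 \<longrightarrow> a \<bullet> z < 0)"
proof
  assume e: "exposes Q a u"
  show "\<forall>z\<in>TC Q u. z \<noteq> 0 \<longrightarrow> a \<bullet> z < 0"
  proof (intro ballI impI)
    fix z assume "z \<in> TC Q u" "z \<noteq> 0"
    then obtain l x where z: "z = l *\<^sub>R (x - u)" "l \<ge> 0" "x \<in> Q" unfolding TC_eq by auto
    then have "l > 0" "x \<noteq> u" using \<open>z \<noteq> 0\<close> by auto
    then have "a \<bullet> (x - u) < 0" using e z unfolding exposes_def by (simp add: inner_diff_right)
    then show "a \<bullet> z < 0" using z \<open>l > 0\<close> by (simp add: mult_pos_neg)
  qed
next
  assume h: "\<forall>z\<in>TC Q u. z \<noteq> 0 \<longrightarrow> a \<bullet> z < 0"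
  show "exposes Q a u" unfolding exposes_def
  proof (intro conjI ballI impI)
    fix x assume "x \<in> Q" "x \<noteq> u"
    then have "x - u \<in> TC Q u" unfolding TC_eq by (auto intro!: exI[of _ 1])
    then have "a \<bullet> (x - u) < 0" using h \<open>x \<noteq> u\<close> by auto
    then show "a \<bullet> x < a \<bullet> u" by (simp add: inner_diff_right)
  qed (rule assms)
qed

lemma max_TC:
  assumes "u \<in> Q"
  shows "(\<forall>x\<in>Q. c \<bullet> x \<le> c \<bullet> u) \<longleftrightarrow> (\<forall>z\<in>TC Q u. c \<bullet> z \<le> 0)"
proof
  assume h: "\<forall>x\<in>Q. c \<bullet> x \<le> c \<bullet> u"
  show "\<forall>z\<in>TC Q u. c \<bullet> z \<le> 0"
  proof
    fix z assume "z \<in> TC Q u"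
    then obtain l x where z: "z = l *\<^sub>R (x - u)" "l \<ge> 0" "x \<in> Q" unfolding TC_eq by auto
    then have "c \<bullet> (x - u) \<le> 0" using h by (simp add: inner_diff_right)
    then show "c \<bullet> z \<le> 0" using z by (simp add: mult_nonneg_nonpos)
  qed
next
  assume h: "\<forall>z\<in>TC Q u. c \<bullet> z \<le> 0"
  show "\<forall>x\<in>Q. c \<bullet> x \<le> c \<bullet> u"
  proof
    fix x assume "x \<in> Q"
    then have "x - u \<in> TC Q u" unfolding TC_eq by (auto intro!: exI[of _ 1])
    then show "c \<bullet> x \<le> c \<bullet> u" using h by (auto simp: inner_diff_right)
  qed
qed

lemma TC_closed_convex:
  assumes "polytope Q"
  shows "closed (TC Q u)" "convex (TC Q u)"
proof -
  have eq: "TC Q u = conic hull ((\<lambda>x. x - u) ` Q)"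
    unfolding TC_eq conic_hull_explicit by blast
  have "(\<lambda>x. x - u) ` Q = (+) (-u) ` Q" by auto
  then have "polytope ((\<lambda>x. x - u) ` Q)" using polytope_translation_eq assms by metis
  then have "polyhedron (TC Q u)" using eq polyhedron_conic_hull_polytope by metis
  then show "closed (TC Q u)" "convex (TC Q u)"
    using polyhedron_imp_closed polyhedron_imp_convex by auto
qed

lemma zero_TC: "u \<in> Q \<Longrightarrow> 0 \<in> TC Q u"
  unfolding TC_eq by (auto intro!: exI[of _ 0] exI[of _ u])

lemma core:
  fixes Q :: "'a::euclidean_space set"
  assumes "polytope Q" "u \<in> Q" "v \<in> Q" "exposes Q a0 u"
    and H: "\<And>a. exposes Q a u \<Longrightarrow> \<forall>x\<in>Q. (-a) \<bullet> x \<le> (-a) \<bullet> v"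
    and z: "z \<in> TC Q v"
  shows "-z \<in> TC Q u"
proof (rule ccontr)
  assume "-z \<notin> TC Q u"
  then obtain c d where cd: "c \<bullet> (-z) < d" "\<forall>x\<in>TC Q u. c \<bullet> x > d"
    using separating_hyperplane_closed_point[OF TC_closed_convex(2)[OF assms(1)] TC_closed_convex(1)[OF assms(1)]] by blast
  have "d < 0" using cd zero_TC[OF assms(2)] by fastforce
  have cneg: "\<forall>y\<in>TC Q u. (-c) \<bullet> y \<le> 0"
  proof (rule ccontr)
    assume "\<not> (\<forall>y\<in>TC Q u. (-c) \<bullet> y \<le> 0)"
    then obtain y where y: "y \<in> TC Q u" "c \<bullet> y < 0" by auto
    then obtain l x where yx: "y = l *\<^sub>R (x - u)" "l \<ge> 0" "x \<in> Q" unfolding TC_eq by auto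
    define s where "s = (d - 1) / (c \<bullet> y)"
    have "s \<ge> 0" using y \<open>d < 0\<close> by (simp add: s_def divide_nonpos_neg)
    have "s *\<^sub>R y \<in> TC Q u" unfolding TC_eq using yx \<open>s \<ge> 0\<close>
      by (auto intro!: exI[of _ "s * l"] exI[of _ x])
    moreover have "c \<bullet> (s *\<^sub>R y) = d - 1" using y by (simp add: s_def)
    ultimately show False using cd by force
  qed
  then have umax: "\<forall>x\<in>Q. (-c) \<bullet> x \<le> (-c) \<bullet> u" using max_TC[OF assms(2)] by blast
  obtain l x where zx: "z = l *\<^sub>R (x - v)" "l \<ge> 0" "x \<in> Q" using z unfolding TC_eq by auto
  have "c \<bullet> (-z) < 0" using cd \<open>d < 0\<close> by simp
  then have h: "0 < l * (c \<bullet> x - c \<bullet> v)" using zx by (simp add: inner_diff_right algebra_simps)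
  then have gap: "c \<bullet> x > c \<bullet> v" using zx(2) by (auto simp: zero_less_mult_iff)
  define g where "g = c \<bullet> x - c \<bullet> v"
  define t where "t = g / (2 * (\<bar>a0 \<bullet> (v - x)\<bar> + 1))"
  have "g > 0" using gap g_def by simp
  then have "t > 0" by (simp add: t_def)
  have "exposes Q ((-c) + t *\<^sub>R a0) u"
    unfolding exposes_def
  proof (intro conjI ballI impI)
    fix y assume "y \<in> Q" "y \<noteq> u"
    then have "a0 \<bullet> y < a0 \<bullet> u" using assms(4) unfolding exposes_def by auto
    moreover have "(-c) \<bullet> y \<le> (-c) \<bullet> u" using umax \<open>y \<in> Q\<close> by blast
    moreover have "t * (a0 \<bullet> y) < t * (a0 \<bullet> u)" using \<open>t > 0\<close> calculation(1) by simp
    ultimately show "((-c) + t *\<^sub>R a0) \<bullet> y < ((-c) + t *\<^sub>R a0) \<bullet> u"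
      by (simp add: inner_add_left inner_diff_left)
  qed (rule assms(2))
  then have "(-((-c) + t *\<^sub>R a0)) \<bullet> x \<le> (-((-c) + t *\<^sub>R a0)) \<bullet> v" using H zx by blast
  then have ineq: "g \<le> t * (a0 \<bullet> x - a0 \<bullet> v)" by (simp add: g_def inner_add_left algebra_simps)
  have "t * (a0 \<bullet> x - a0 \<bullet> v) \<le> t * \<bar>a0 \<bullet> (v - x)\<bar>"
    using \<open>t > 0\<close> by (intro mult_left_mono) (auto simp: inner_diff_right)
  also have "\<dots> < g"
  proof -
    have "t * (2 * (\<bar>a0 \<bullet> (v - x)\<bar> + 1)) = g" unfolding t_def by simp
    then have "g = 2 * (t * \<bar>a0 \<bullet> (v - x)\<bar>) + 2 * t" by (simp add: algebra_simps)
    moreover have "t * \<bar>a0 \<bullet> (v - x)\<bar> \<ge> 0" using \<open>t > 0\<close> by simp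
    ultimately show ?thesis using \<open>t > 0\<close> by linarith
  qed
  finally show False using ineq by simp
qed



lemma SA_sym:
  fixes Q :: "'a::euclidean_space set"
  assumes "strictly_antipodal Q u w" "u \<noteq> w"
  shows "strictly_antipodal Q w u"
proof -
  obtain a where "exposes Q a u" "exposes Q (-a) w" using SA_imp assms by blast
  then show ?thesis using SA_intro[of Q "-a" w u] assms(2) by simp
qed

lemma SA_vertices: "strictly_antipodal Q u w \<Longrightarrow> u \<in> vertices Q \<and> w \<in> vertices Q"
  unfolding strictly_antipodal_def by blast

lemma cone_cond_iff: "((\<lambda>x. x - u) ` supporting_cone Q u = (\<lambda>x. v - x) ` supporting_cone Q v)
   \<longleftrightarrow> TC Q u = uminus ` TC Q v"
  unfolding refl_eq TC_def[symmetric] ..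

lemma cone_transfer:
  assumes "TC Q u = uminus ` TC Q v" "u \<in> Q" "v \<in> Q" "exposes Q a u"
  shows "exposes Q (-a) v"
proof -
  have h: "\<forall>z\<in>TC Q u. z \<noteq> 0 \<longrightarrow> a \<bullet> z < 0" using exposes_TC[OF assms(2)] assms(4) by blast
  have "\<forall>z\<in>TC Q v. z \<noteq> 0 \<longrightarrow> (-a) \<bullet> z < 0"
  proof (intro ballI impI)
    fix z assume "z \<in> TC Q v" "z \<noteq> 0"
    then have "-z \<in> TC Q u" "-z \<noteq> 0" using assms(1) by auto
    then have "a \<bullet> (-z) < 0" using h by blast
    then show "(-a) \<bullet> z < 0" by simp
  qed
  then show ?thesis using exposes_TC[OF assms(3)] by blast
qed

lemma cone_sym: "TC Q u = uminus ` TC Q v \<Longrightarrow> TC Q v = uminus ` TC Q u"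
  by (simp add: image_image)

lemma partner_unique:
  fixes Q :: "'a::euclidean_space set"
  assumes "polytope Q" "TC Q u = uminus ` TC Q v" "u \<in> vertices Q" "v \<in> vertices Q"
    "strictly_antipodal Q u w" "u \<noteq> w"
  shows "w = v"
proof -
  have VQ: "vertices Q \<subseteq> Q" using poly_facts[OF assms(1)] by blast
  obtain a where a: "exposes Q a u" "exposes Q (-a) w" using SA_imp assms(5,6) by blast
  have "exposes Q (-a) v" using cone_transfer[OF assms(2)] VQ assms(3,4) a(1) by blast
  then show ?thesis using a(2) exposes_unique by blast
qed

lemma LPS_imp:
  fixes Q :: "'a::euclidean_space set"
  assumes "polytope Q" "locally_point_symmetric Q"
  shows "2 * card (antipodal_pairs Q) = card (vertices Q)"
proof -
  obtain P where PP: "(\<forall>p\<in>P. \<exists>u v. p = {u, v} \<and> u \<noteq> v \<and> strictly_antipodal Q u v \<and>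
              (\<lambda>x. x - u) ` supporting_cone Q u = (\<lambda>x. v - x) ` supporting_cone Q v) \<and>
          (\<forall>p\<in>P. \<forall>q\<in>P. p \<noteq> q \<longrightarrow> p \<inter> q = {}) \<and>
          \<Union>P = vertices Q \<and> 2 * card P = card (vertices Q)"
    using assms(2) unfolding locally_point_symmetric_def by (rule exE)
  note P = PP[THEN conjunct1] PP[THEN conjunct2, THEN conjunct2, THEN conjunct1]
     PP[THEN conjunct2, THEN conjunct2, THEN conjunct2]
  have P1: "\<forall>p\<in>P. \<exists>u v. p = {u, v} \<and> u \<noteq> v \<and> strictly_antipodal Q u v \<and> TC Q u = uminus ` TC Q v"
    using P(1) by (simp only: cone_cond_iff)
  have "antipodal_pairs Q = P"
  proof
    show "P \<subseteq> antipodal_pairs Q"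
    proof
      fix p assume "p \<in> P"
      obtain u v where "p = {u, v}" "u \<noteq> v" "strictly_antipodal Q u v" using bspec[OF P1 \<open>p \<in> P\<close>] by blast
      then show "p \<in> antipodal_pairs Q" unfolding antipodal_pairs_def by blast
    qed
    show "antipodal_pairs Q \<subseteq> P"
    proof
      fix p' assume "p' \<in> antipodal_pairs Q"
      then obtain u w where uw: "p' = {u, w}" "u \<noteq> w" "strictly_antipodal Q u w"
        unfolding antipodal_pairs_def by blast
      have "u \<in> vertices Q" using SA_vertices uw(3) by blast
      then obtain p where p: "p \<in> P" "u \<in> p" using P(2) by blast
      obtain u' v' where uv: "p = {u', v'}" "u' \<noteq> v'" "strictly_antipodal Q u' v'"
          "TC Q u' = uminus ` TC Q v'"
        using bspec[OF P1 p(1)] by blast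
      have V: "u' \<in> vertices Q" "v' \<in> vertices Q" using SA_vertices uv(3) by blast+
      show "p' \<in> P"
      proof (cases "u = u'")
        case True
        then have "w = v'" using partner_unique[OF assms(1) uv(4) V uw(3)[unfolded True] uw(2)[unfolded True]] by blast
        then have "p' = p" using uw(1) uv(1) True by simp
        then show ?thesis using p(1) by simp
      next
        case False
        then have "u = v'" using p(2) uv(1) by blast
        then have "w = u'" using partner_unique[OF assms(1) cone_sym[OF uv(4)] V(2) V(1) uw(3)[unfolded \<open>u = v'\<close>] uw(2)[unfolded \<open>u = v'\<close>]] by blast
        then have "p' = p" using uw(1) uv(1) \<open>u = v'\<close> by auto
        then show ?thesis using p(1) by simp
      qed
    qed
  qed
  then show ?thesis using P(3) by simp
qed



lemma disj_count:
  fixes F :: "'b set set"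
  assumes fin: "finite V" and sub: "\<Union>F = V" and two: "\<forall>p\<in>F. \<exists>a b. p = {a, b} \<and> a \<noteq> b"
    and cnt: "2 * card F = card V"
  shows "\<forall>p\<in>F. \<forall>q\<in>F. p \<noteq> q \<longrightarrow> p \<inter> q = {}"
proof (intro ballI impI, rule ccontr)
  fix p q assume pq: "p \<in> F" "q \<in> F" "p \<noteq> q" "p \<inter> q \<noteq> {}"
  have finF: "finite F"
  proof (rule finite_subset)
    show "F \<subseteq> Pow V" using sub by blast
    show "finite (Pow V)" using fin by simp
  qed
  obtain x where x: "x \<in> p" "x \<in> q" using pq(4) by blast
  obtain a b where ab: "q = {a, b}" "a \<noteq> b" using two pq(2) by blast
  obtain y where y: "q \<subseteq> {x, y}" using ab x(2) by blast
  have "V \<subseteq> \<Union>(F - {q}) \<union> {y}"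
  proof
    fix z assume "z \<in> V"
    then obtain r where r: "r \<in> F" "z \<in> r" using sub by blast
    show "z \<in> \<Union>(F - {q}) \<union> {y}"
    proof (cases "r = q")
      case True
      then have "z = x \<or> z = y" using y r(2) by blast
      then show ?thesis using x(1) pq(1,3) by blast
    next
      case False
      then show ?thesis using r by blast
    qed
  qed
  then have "card V \<le> card (\<Union>(F - {q}) \<union> {y})"
    by (rule card_mono[rotated]) (use finF sub fin in \<open>auto intro: finite_subset\<close>)
  also have "\<dots> \<le> card (\<Union>(F - {q})) + card {y}" by (rule card_Un_le)
  also have "card (\<Union>(F - {q})) \<le> sum card (F - {q})" by (rule card_Union_le_sum_card)
  also have "sum card (F - {q}) = sum (\<lambda>_. 2) (F - {q})"
  proof (rule sum.cong)
    fix r assume "r \<in> F - {q}"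
    then obtain c d where "r = {c, d}" "c \<noteq> d" using two by blast
    then show "card r = 2" by simp
  qed simp
  also have "\<dots> = 2 * (card F - 1)" using finF pq(2) by simp
  finally have "card V \<le> 2 * (card F - 1) + 1" by simp
  moreover have "card F \<ge> 1" using finF pq(2) by (metis One_nat_def Suc_leI card_gt_0_iff empty_iff)
  ultimately show False using cnt by linarith
qed



lemma max_vertex:
  fixes Q :: "'a::euclidean_space set"
  assumes "polytope Q" "vertices Q \<noteq> {}"
  shows "\<exists>w\<in>vertices Q. \<forall>x\<in>vertices Q. f \<bullet> x \<le> f \<bullet> w"
proof -
  have fin: "finite (vertices Q)" using poly_facts[OF assms(1)] by blast
  define M where "M = Max ((\<lambda>x. f \<bullet> x) ` vertices Q)"
  have "M \<in> (\<lambda>x. f \<bullet> x) ` vertices Q" unfolding M_def using fin assms(2) by (intro Max_in) auto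
  then obtain w where w: "w \<in> vertices Q" "M = f \<bullet> w" by blast
  have "\<forall>x\<in>vertices Q. f \<bullet> x \<le> M" unfolding M_def using fin by (auto intro: Max_ge)
  then show ?thesis using w by auto
qed

lemma partner_of_exposing:
  fixes Q :: "'a::euclidean_space set"
  assumes "polytope Q" "exposes Q a u" "w \<in> vertices Q" "\<forall>x\<in>vertices Q. (-a) \<bullet> x \<le> (-a) \<bullet> w"
    "y \<in> Q" "y \<noteq> u"
  shows "w \<noteq> u \<and> strictly_antipodal Q u w"
proof -
  obtain a' where a': "exposes Q a' u" "exposes Q (-a') w" using perturb assms(1-4) by blast
  have "w \<noteq> u"
  proof
    assume "w = u"
    then have "a' \<bullet> y < a' \<bullet> u" "(-a') \<bullet> y < (-a') \<bullet> u" using a' assms(5,6) unfolding exposes_def by blast+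
    then show False by simp
  qed
  then show ?thesis using SA_intro a' by metis
qed

lemma H_from_unique:
  fixes Q :: "'a::euclidean_space set"
  assumes "polytope Q" "v \<in> Q" "v \<noteq> u"
    and uniq: "\<And>w. strictly_antipodal Q u w \<Longrightarrow> u \<noteq> w \<Longrightarrow> w = v"
    and ex: "exposes Q a u"
  shows "\<forall>x\<in>Q. (-a) \<bullet> x \<le> (-a) \<bullet> v"
proof -
  have fin: "finite (vertices Q)" and Qh: "Q = convex hull (vertices Q)" using poly_facts[OF assms(1)] by blast+
  have "vertices Q \<noteq> {}" using exposes_vertex[OF ex] by blast
  then obtain w where w: "w \<in> vertices Q" "\<forall>x\<in>vertices Q. (-a) \<bullet> x \<le> (-a) \<bullet> w"
    using max_vertex[OF assms(1)] by blast
  have "w \<noteq> u \<and> strictly_antipodal Q u w" using partner_of_exposing[OF assms(1) ex w assms(2,3)] .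
  then have "w = v" using uniq by metis
  then have "\<forall>x\<in>vertices Q. (-a) \<bullet> x \<le> (-a) \<bullet> v" using w by simp
  then show ?thesis using hull_le Qh by metis
qed

lemma count_imp_LPS:
  fixes Q :: "'a::euclidean_space set"
  assumes poly: "polytope Q" and cnt: "2 * card (antipodal_pairs Q) = card (vertices Q)"
  shows "locally_point_symmetric Q"
proof -
  let ?V = "vertices Q" and ?A = "antipodal_pairs Q"
  have fin: "finite ?V" and Qh: "Q = convex hull ?V" and VQ: "?V \<subseteq> Q" using poly_facts[OF poly] by blast+
  have two: "\<forall>p\<in>?A. \<exists>a b. p = {a, b} \<and> a \<noteq> b" unfolding antipodal_pairs_def by blast
  have Usub: "\<Union>?A \<subseteq> ?V" unfolding antipodal_pairs_def using SA_vertices by blast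
  have partner: "\<exists>w. w \<noteq> u \<and> strictly_antipodal Q u w" if u: "u \<in> ?V" for u
  proof -
    have "card ?V > 0" using u fin card_gt_0_iff by blast
    then have "card ?V \<ge> 2" using cnt by presburger
    have "\<exists>y\<in>?V. y \<noteq> u"
    proof (rule ccontr)
      assume "\<not> (\<exists>y\<in>?V. y \<noteq> u)"
      then have "?V \<subseteq> {u}" by blast
      then have "card ?V \<le> 1" using card_mono[of "{u}" ?V] by simp
      then show False using \<open>card ?V \<ge> 2\<close> by simp
    qed
    then obtain y where y: "y \<in> Q" "y \<noteq> u" using VQ by blast
    obtain a where a: "exposes Q a u" using vertex_exposed[OF poly u] by blast
    obtain w where w: "w \<in> ?V" "\<forall>x\<in>?V. (-a) \<bullet> x \<le> (-a) \<bullet> w"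
      using max_vertex[OF poly] u by blast
    show ?thesis using partner_of_exposing[OF poly a w y] by blast
  qed
  have UA: "\<Union>?A = ?V"
  proof
    show "?V \<subseteq> \<Union>?A"
    proof
      fix u assume "u \<in> ?V"
      then obtain w where "w \<noteq> u" "strictly_antipodal Q u w" using partner by blast
      then have "{u, w} \<in> ?A" unfolding antipodal_pairs_def by blast
      then show "u \<in> \<Union>?A" by blast
    qed
  qed (rule Usub)
  have disj: "\<forall>p\<in>?A. \<forall>q\<in>?A. p \<noteq> q \<longrightarrow> p \<inter> q = {}"
    using disj_count[OF fin UA two cnt] .
  have uniq: "w = v" if "{u, v} \<in> ?A" "strictly_antipodal Q u w" "u \<noteq> w" for u v w
  proof -
    have "{u, w} \<in> ?A" unfolding antipodal_pairs_def using that(2,3) by blast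
    note uw = this
    have eq: "{u, w} = {u, v}"
    proof (rule ccontr)
      assume ne: "{u, w} \<noteq> {u, v}"
      have "{u, w} \<inter> {u, v} = {}" using disj[rule_format, OF uw that(1) ne] .
      then show False by simp
    qed
    have "w \<in> {u, w}" by simp
    then have "w \<in> {u, v}" by (simp only: eq)
    then show "w = v" using that(3) by simp
  qed
  have cone: "TC Q u = uminus ` TC Q v"
    if p: "{u, v} \<in> ?A" and uv: "u \<noteq> v" "strictly_antipodal Q u v" for u v
  proof -
    have V: "u \<in> ?V" "v \<in> ?V" using SA_vertices uv(2) by blast+
    have p': "{v, u} \<in> ?A" using p by (simp add: insert_commute)
    obtain a0 where a0: "exposes Q a0 u" using vertex_exposed[OF poly V(1)] by blast
    obtain b0 where b0: "exposes Q b0 v" using vertex_exposed[OF poly V(2)] by blast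
    have uQ: "u \<in> Q" and vQ: "v \<in> Q" using V VQ by blast+
    have Hu: "\<forall>x\<in>Q. (-a) \<bullet> x \<le> (-a) \<bullet> v" if "exposes Q a u" for a
      by (rule H_from_unique[OF poly vQ uv(1)[symmetric] uniq[OF p] that])
    have Hv: "\<forall>x\<in>Q. (-a) \<bullet> x \<le> (-a) \<bullet> u" if "exposes Q a v" for a
      by (rule H_from_unique[OF poly uQ uv(1) uniq[OF p'] that])
    have c1: "-z \<in> TC Q u" if "z \<in> TC Q v" for z
      by (rule core[OF poly uQ vQ a0 Hu that])
    have c2: "-z \<in> TC Q v" if "z \<in> TC Q u" for z
      by (rule core[OF poly vQ uQ b0 Hv that])
    show ?thesis
    proof
      show "TC Q u \<subseteq> uminus ` TC Q v"
      proof
        fix z assume "z \<in> TC Q u"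
        then have "-z \<in> TC Q v" by (rule c2)
        moreover have "z = - (-z)" by simp
        ultimately show "z \<in> uminus ` TC Q v" by (rule rev_image_eqI)
      qed
      show "uminus ` TC Q v \<subseteq> TC Q u" using c1 by blast
    qed
  qed
  have P1: "\<forall>p\<in>?A. \<exists>u v. p = {u, v} \<and> u \<noteq> v \<and> strictly_antipodal Q u v \<and>
              (\<lambda>x. x - u) ` supporting_cone Q u = (\<lambda>x. v - x) ` supporting_cone Q v"
  proof
    fix p assume p: "p \<in> ?A"
    then obtain u v where uv: "p = {u, v}" "u \<noteq> v" "strictly_antipodal Q u v"
      unfolding antipodal_pairs_def by blast
    have "{u, v} \<in> ?A" using p uv(1) by simp
    then have "TC Q u = uminus ` TC Q v" by (rule cone[OF _ uv(2,3)])
    then have "(\<lambda>x. x - u) ` supporting_cone Q u = (\<lambda>x. v - x) ` supporting_cone Q v"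
      by (rule cone_cond_iff[THEN iffD2])
    then show "\<exists>u v. p = {u, v} \<and> u \<noteq> v \<and> strictly_antipodal Q u v \<and>
              (\<lambda>x. x - u) ` supporting_cone Q u = (\<lambda>x. v - x) ` supporting_cone Q v"
      using uv by (intro exI[of _ u] exI[of _ v] conjI)
  qed
  show ?thesis unfolding locally_point_symmetric_def
    by (rule exI[of _ ?A]) (intro conjI P1 disj UA cnt)
qed


theorem lemma6:
  fixes Q :: "'a::euclidean_space set"
  assumes "polytope Q" and "aff_dim Q = int DIM('a)"
  shows "locally_point_symmetric Q \<longleftrightarrow> 2 * card (antipodal_pairs Q) = card (vertices Q)"
proof
  assume "locally_point_symmetric Q"
  then show "2 * card (antipodal_pairs Q) = card (vertices Q)" by (rule LPS_imp[OF assms(1)])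
next
  assume "2 * card (antipodal_pairs Q) = card (vertices Q)"
  then show "locally_point_symmetric Q" by (rule count_imp_LPS[OF assms(1)])
qed

end
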